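(* Let $n\ge1$, let $f:\{0,1\}^n\to\{0,1\}^n$, let $\check{M}$ be the adjacency matrix of its asynchronous iteration graph $\Gamma(f)$ (with respect to an enumeration of $\{0,1\}^n$), and let $M$ be the $2^n\times 2^n$ matrix with $M_{ij}=\frac{1}{n}\check{M}_{ij}$ for $i\neq j$ and $M_{ii}=1-\frac{1}{n}\sum_{j\neq i}\check{M}_{ij}$. If $\Gamma(f)$ is strongly connected, then the law of the output of the generator described below tends to the uniform distribution on $\{0,1\}^n$ if and only if $M$ is doubly stochastic (all its rows and all its columns sum to $1$).
   Context: With $F_f(i,x)=(x_1,\dots,x_{i-1},f_i(x),x_{i+1},\dots,x_n)$, $\Gamma(f)$ is the directed graph on $\{0,1\}^n$ with an arc from $x$ to $F_f(i,x)$ for every $x$ and $i\in\{1,\dots,n\}$; $\check{M}_{ij}=1$ if there is an arc from the $i$-th to the $j$-th configuration and $0$ otherwise. The generator (with parameters $f$, an integer $b$ and an initial configuration $x^0\in\{0,1\}^n$) does: set $x\leftarrow x^0$; draw $k\leftarrow b+r$ with $r$ uniformly distributed in $\{1,\dots,b+1\}$; then $k$ times, draw $s$ uniformly in $\{1,\dots,n\}$ and set $x\leftarrow F_f(s,x)$; output $x$. All random draws are provided by a uniform pseudo-random generator (XORshift), modeled as independent uniform draws, so that each step of the iteration is a Markov chain transition with matrix $M$. "Tends to the uniform distribution" refers to the law of the output as the number of iterations grows (i.e. as $b\to\infty$). *)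

theory Defs
  imports "HOL-Probability.Probability"
begin

text \<open>Configurations of {0,1}^n are boolean lists of length n (True = 1).
  Coordinates are indexed 1..n as in the paper.\<close>

definition configs :: "nat \<Rightarrow> bool list set" where
  "configs n = {x. length x = n}"

definition Ff :: "(bool list \<Rightarrow> bool list) \<Rightarrow> nat \<Rightarrow> bool list \<Rightarrow> bool list" where
  "Ff f i x = x[i - 1 := f x ! (i - 1)]"

definition arc :: "nat \<Rightarrow> (bool list \<Rightarrow> bool list) \<Rightarrow> bool list \<Rightarrow> bool list \<Rightarrow> bool" where
  "arc n f x y \<longleftrightarrow> x \<in> configs n \<and> (\<exists>i\<in>{1..n}. y = Ff f i x)"

definition strongly_connected_Gamma :: "nat \<Rightarrow> (bool list \<Rightarrow> bool list) \<Rightarrow> bool" where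
  "strongly_connected_Gamma n f \<longleftrightarrow>
     (\<forall>x\<in>configs n. \<forall>y\<in>configs n. (x, y) \<in> {(u, v). arc n f u v}\<^sup>*)"

text \<open>Adjacency matrix check-M of Gamma(f), indexed directly by configurations.\<close>
definition Mcheck :: "nat \<Rightarrow> (bool list \<Rightarrow> bool list) \<Rightarrow> bool list \<Rightarrow> bool list \<Rightarrow> real" where
  "Mcheck n f x y = (if arc n f x y then 1 else 0)"

definition Mmat :: "nat \<Rightarrow> (bool list \<Rightarrow> bool list) \<Rightarrow> bool list \<Rightarrow> bool list \<Rightarrow> real" where
  "Mmat n f x y =
     (if x = y then 1 - (1 / real n) * (\<Sum>z\<in>configs n - {x}. Mcheck n f x z)
      else (1 / real n) * Mcheck n f x y)"

definition doubly_stochastic :: "'a set \<Rightarrow> ('a \<Rightarrow> 'a \<Rightarrow> real) \<Rightarrow> bool" where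
  "doubly_stochastic S A \<longleftrightarrow>
     (\<forall>x\<in>S. \<forall>y\<in>S. A x y \<ge> 0) \<and>
     (\<forall>x\<in>S. (\<Sum>y\<in>S. A x y) = 1) \<and>
     (\<forall>y\<in>S. (\<Sum>x\<in>S. A x y) = 1)"

definition gen_step :: "nat \<Rightarrow> (bool list \<Rightarrow> bool list) \<Rightarrow> bool list \<Rightarrow> bool list pmf" where
  "gen_step n f x = map_pmf (\<lambda>s. Ff f s x) (pmf_of_set {1..n})"

definition gen_iter :: "nat \<Rightarrow> (bool list \<Rightarrow> bool list) \<Rightarrow> nat \<Rightarrow> bool list \<Rightarrow> bool list pmf" where
  "gen_iter n f k x0 = ((\<lambda>p. bind_pmf p (gen_step n f)) ^^ k) (return_pmf x0)"

definition generator :: "nat \<Rightarrow> (bool list \<Rightarrow> bool list) \<Rightarrow> nat \<Rightarrow> bool list \<Rightarrow> bool list pmf" where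
  "generator n f b x0 = bind_pmf (pmf_of_set {1..b+1}) (\<lambda>r. gen_iter n f (b + r) x0)"

end

theory Submission imports Defs begin

lemma configs_finite: "finite (configs n)"
  unfolding configs_def using finite_lists_length_eq[of "UNIV::bool set" n] by simp

lemma configs_ne: "replicate n False \<in> configs n" by (simp add: configs_def)

lemma Ff_in: "x \<in> configs n \<Longrightarrow> Ff f i x \<in> configs n" by (simp add: Ff_def configs_def)

lemma set_step: "n \<ge> 1 \<Longrightarrow> x \<in> configs n \<Longrightarrow> set_pmf (gen_step n f x) \<subseteq> configs n"
  unfolding gen_step_def using Ff_in by (auto simp: set_pmf_of_set)

lemma gen_iter_0: "gen_iter n f 0 x = return_pmf x" by (simp add: gen_iter_def)
lemma gen_iter_Suc: "gen_iter n f (Suc k) x = bind_pmf (gen_iter n f k x) (gen_step n f)"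
  by (simp add: gen_iter_def)

lemma gen_iter_Suc': "gen_iter n f (Suc k) x = bind_pmf (gen_step n f x) (\<lambda>z. gen_iter n f k z)"
proof (induction k arbitrary: x)
  case 0 show ?case by (simp add: gen_iter_0 gen_iter_Suc bind_return_pmf bind_return_pmf')
next
  case (Suc k)
  have "gen_iter n f (Suc (Suc k)) x = bind_pmf (gen_iter n f (Suc k) x) (gen_step n f)" by (rule gen_iter_Suc)
  also have "\<dots> = bind_pmf (bind_pmf (gen_step n f x) (\<lambda>z. gen_iter n f k z)) (gen_step n f)" by (simp only: Suc)
  also have "\<dots> = bind_pmf (gen_step n f x) (\<lambda>z. bind_pmf (gen_iter n f k z) (gen_step n f))" by (rule bind_assoc_pmf)
  also have "\<dots> = bind_pmf (gen_step n f x) (\<lambda>z. gen_iter n f (Suc k) z)" by (simp only: gen_iter_Suc)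
  finally show ?case .
qed

lemma set_iter: "n \<ge> 1 \<Longrightarrow> x \<in> configs n \<Longrightarrow> set_pmf (gen_iter n f k x) \<subseteq> configs n"
proof (induction k arbitrary: x)
  case 0 then show ?case by (simp add: gen_iter_0)
next
  case (Suc k) then show ?case using set_step[of n x f] by (auto simp: gen_iter_Suc')
qed

lemma pmf_bind_fin: "finite A \<Longrightarrow> set_pmf M \<subseteq> A \<Longrightarrow> pmf (bind_pmf M g) y = (\<Sum>a\<in>A. pmf M a * pmf (g a) y)"
  by (subst pmf_bind, subst integral_measure_pmf[of A]) auto

lemma step_sum: "n \<ge> 1 \<Longrightarrow> x \<in> configs n \<Longrightarrow> (\<Sum>z\<in>configs n. pmf (gen_step n f x) z) = 1"
  by (rule sum_pmf_eq_1[OF configs_finite set_step])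

lemma iter_back: "n \<ge> 1 \<Longrightarrow> x \<in> configs n \<Longrightarrow>
   pmf (gen_iter n f (Suc k) x) y = (\<Sum>z\<in>configs n. pmf (gen_step n f x) z * pmf (gen_iter n f k z) y)"
  unfolding gen_iter_Suc' by (rule pmf_bind_fin[OF configs_finite set_step])

lemma iter_fwd: "n \<ge> 1 \<Longrightarrow> x \<in> configs n \<Longrightarrow>
   pmf (gen_iter n f (Suc k) x) y = (\<Sum>z\<in>configs n. pmf (gen_iter n f k x) z * pmf (gen_step n f z) y)"
  unfolding gen_iter_Suc by (rule pmf_bind_fin[OF configs_finite set_iter])

lemma step_arc: assumes "n \<ge> 1" "arc n f x z" shows "pmf (gen_step n f x) z \<ge> 1 / real n"
proof -
  obtain i where i: "i \<in> {1..n}" "z = Ff f i x" using assms(2) unfolding arc_def by auto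
  have fin: "finite {1..n}" "{1..n} \<noteq> {}" using assms(1) by auto
  have "pmf (gen_step n f x) z = measure (pmf_of_set {1..n}) ((\<lambda>s. Ff f s x) -` {z})"
    unfolding gen_step_def pmf_map ..
  also have "\<dots> \<ge> measure (pmf_of_set {1..n}) {i}"
    by (rule measure_pmf.finite_measure_mono) (use i in auto)
  moreover have "measure (pmf_of_set {1..n}) {i} = 1 / real n"
    using fin i by (simp add: measure_pmf_of_set)
  ultimately show ?thesis by simp
qed

lemma step_off: assumes "n \<ge> 1" "x \<in> configs n" "y \<noteq> x"
  shows "pmf (gen_step n f x) y = (1 / real n) * Mcheck n f x y"
proof -
  have fin: "finite {1..n}" "{1..n} \<noteq> {}" using assms(1) by auto
  have "pmf (gen_step n f x) y = measure (pmf_of_set {1..n}) ((\<lambda>s. Ff f s x) -` {y})"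
    unfolding gen_step_def pmf_map ..
  also have "\<dots> = card ({1..n} \<inter> (\<lambda>s. Ff f s x) -` {y}) / real n"
    using fin by (simp add: measure_pmf_of_set)
  also have "card ({1..n} \<inter> (\<lambda>s. Ff f s x) -` {y}) = (if arc n f x y then 1 else 0)"
  proof (cases "arc n f x y")
    case True
    then obtain i where i: "i \<in> {1..n}" "y = Ff f i x" unfolding arc_def by auto
    have uniq: "s = i" if s: "s \<in> {1..n}" "Ff f s x = y" for s
    proof (rule ccontr)
      assume ne: "s \<noteq> i"
      have ls: "s - 1 < length x" "i - 1 < length x" using s i assms(2) by (auto simp: configs_def)
      have ne': "s - 1 \<noteq> i - 1" using ne s i by auto
      have "y ! (s - 1) = x ! (s - 1)" using i ne' by (simp add: Ff_def)
      moreover have "y = x[s - 1 := y ! (s - 1)]" using s ls by (auto simp: Ff_def)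
      ultimately have "y = x" by simp
      then show False using assms(3) by simp
    qed
    have "{1..n} \<inter> (\<lambda>s. Ff f s x) -` {y} = {i}"
      using uniq i by blast
    then show ?thesis using True by simp
  next
    case False
    then have "{1..n} \<inter> (\<lambda>s. Ff f s x) -` {y} = {}" using assms(2) unfolding arc_def by auto
    then show ?thesis using False by simp
  qed
  finally show ?thesis by (simp add: Mcheck_def)
qed

lemma Mmat_eq: assumes "n \<ge> 1" "x \<in> configs n" "y \<in> configs n"
  shows "Mmat n f x y = pmf (gen_step n f x) y"
proof (cases "x = y")
  case False then show ?thesis using step_off[OF assms(1,2)] by (simp add: Mmat_def)
next
  case True
  have "1 = (\<Sum>z\<in>configs n. pmf (gen_step n f x) z)" using step_sum assms by simp
  also have "\<dots> = pmf (gen_step n f x) x + (\<Sum>z\<in>configs n - {x}. pmf (gen_step n f x) z)"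
    using assms(2) configs_finite by (simp add: sum.remove)
  also have "(\<Sum>z\<in>configs n - {x}. pmf (gen_step n f x) z) = (\<Sum>z\<in>configs n - {x}. (1 / real n) * Mcheck n f x z)"
    by (rule sum.cong) (use step_off[OF assms(1,2)] in auto)
  finally show ?thesis using True by (simp add: Mmat_def sum_distrib_left)
qed


lemma reach_bound:
  fixes S :: "'a set" and P :: "'a \<Rightarrow> 'a \<Rightarrow> real"
  assumes fin: "finite S" and Pnn: "\<forall>u\<in>S. \<forall>v\<in>S. P u v \<ge> 0"
  and c: "c > 0" and R: "\<And>u v. (u,v) \<in> R \<Longrightarrow> u \<in> S \<and> v \<in> S \<and> P u v \<ge> c"
  and rs: "\<forall>z\<in>S. (\<Sum>w\<in>S. P z w) = 1"
  and xy: "(x,y) \<in> R\<^sup>*" and x: "x \<in> S"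
  shows "\<exists>K\<ge>0. \<forall>h M e. (\<forall>z\<in>S. h z \<le> M) \<longrightarrow> e \<ge> 0 \<longrightarrow>
     (\<forall>z\<in>S. h z - (\<Sum>w\<in>S. P z w * h w) \<le> e) \<longrightarrow> M - h y \<le> K * (M - h x + e)"
  using xy
proof (induction rule: rtrancl_induct)
  case base show ?case by (intro exI[of _ 1]) auto
next
  case (step y z)
  from step.IH obtain K where K: "K \<ge> 0" and HK: "\<forall>h M e. (\<forall>z\<in>S. h z \<le> M) \<longrightarrow> e \<ge> 0 \<longrightarrow>
     (\<forall>z\<in>S. h z - (\<Sum>w\<in>S. P z w * h w) \<le> e) \<longrightarrow> M - h y \<le> K * (M - h x + e)" by blast
  have y: "y \<in> S" and z: "z \<in> S" and Pyz: "P y z \<ge> c" using R[OF step.hyps(2)] by auto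
  show ?case
  proof (intro exI[of _ "(K + 1) / c"] conjI allI impI)
    show "(K + 1) / c \<ge> 0" using K c by simp
    fix h M e assume hM: "\<forall>z\<in>S. h z \<le> M" and e: "e \<ge> 0"
      and he: "\<forall>z\<in>S. h z - (\<Sum>w\<in>S. P z w * h w) \<le> e"
    have IH: "M - h y \<le> K * (M - h x + e)" using HK hM e he by blast
    have "(\<Sum>w\<in>S. P y w * (M - h w)) = M * (\<Sum>w\<in>S. P y w) - (\<Sum>w\<in>S. P y w * h w)"
      by (simp add: algebra_simps sum_subtractf sum_distrib_left)
    also have "\<dots> = M - (\<Sum>w\<in>S. P y w * h w)" using rs y by simp
    also have "\<dots> \<le> M - h y + e" using he y by force
    finally have s1: "(\<Sum>w\<in>S. P y w * (M - h w)) \<le> M - h y + e" .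
    have "P y z * (M - h z) \<le> (\<Sum>w\<in>S. P y w * (M - h w))"
      by (rule member_le_sum) (use z y Pnn hM fin in auto)
    moreover have "c * (M - h z) \<le> P y z * (M - h z)"
      using Pyz hM z by (intro mult_right_mono) auto
    ultimately have "c * (M - h z) \<le> M - h y + e" using s1 by linarith
    also have "\<dots> \<le> K * (M - h x + e) + e" using IH by linarith
    also have "\<dots> \<le> (K + 1) * (M - h x + e)" using hM x e by (simp add: algebra_simps)
    finally have "c * (M - h z) \<le> (K + 1) * (M - h x + e)" .
    then show "M - h z \<le> (K + 1) / c * (M - h x + e)"
      using c by (simp add: field_simps mult.commute)
  qed
qed

lemma bound_all:
  fixes S :: "'a set" and P :: "'a \<Rightarrow> 'a \<Rightarrow> real"
  assumes fin: "finite S" and ne: "S \<noteq> {}" and Pnn: "\<forall>u\<in>S. \<forall>v\<in>S. P u v \<ge> 0"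
  and c: "c > 0" and R: "\<And>u v. (u,v) \<in> R \<Longrightarrow> u \<in> S \<and> v \<in> S \<and> P u v \<ge> c"
  and rs: "\<forall>z\<in>S. (\<Sum>w\<in>S. P z w) = 1"
  and sc: "\<forall>x\<in>S. \<forall>y\<in>S. (x,y) \<in> R\<^sup>*"
  shows "\<exists>K\<ge>0. \<forall>h e. e \<ge> 0 \<longrightarrow> (\<forall>z\<in>S. h z - (\<Sum>w\<in>S. P z w * h w) \<le> e) \<longrightarrow>
     (\<Sum>z\<in>S. h z) = 1 \<longrightarrow> (\<forall>x\<in>S. \<bar>h x - 1 / card S\<bar> \<le> K * e)"
proof -
  let ?Phi = "\<lambda>p K. K \<ge> 0 \<and> (\<forall>h M e. (\<forall>z\<in>S. h z \<le> M) \<longrightarrow> e \<ge> 0 \<longrightarrow>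
     (\<forall>z\<in>S. h z - (\<Sum>w\<in>S. P z w * h w) \<le> e) \<longrightarrow> M - h (snd p) \<le> K * (M - h (fst p) + e))"
  have "\<forall>p\<in>S \<times> S. \<exists>K. ?Phi p K"
  proof
    fix p assume p: "p \<in> S \<times> S"
    then have "(fst p, snd p) \<in> R\<^sup>*" "fst p \<in> S" using sc by auto
    from reach_bound[OF fin Pnn c R rs this] show "\<exists>K. ?Phi p K" by blast
  qed
  then obtain Kf where Kf: "\<forall>p\<in>S \<times> S. ?Phi p (Kf p)" by (rule bchoice[elim_format]) blast
  define K where "K = (\<Sum>p\<in>S \<times> S. Kf p)"
  have KfK: "Kf p \<le> K" if "p \<in> S \<times> S" for p
    unfolding K_def by (rule member_le_sum) (use that Kf fin in auto)
  have K0: "K \<ge> 0" unfolding K_def using Kf by (intro sum_nonneg) auto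
  show ?thesis
  proof (intro exI[of _ K] conjI allI impI ballI K0)
    fix h e x assume e: "(e::real) \<ge> 0" and he: "\<forall>z\<in>S. h z - (\<Sum>w\<in>S. P z w * h w) \<le> e"
      and hs: "(\<Sum>z\<in>S. h z) = 1" and x: "x \<in> S"
    define M where "M = Max (h ` S)"
    have hM: "\<forall>z\<in>S. h z \<le> M" unfolding M_def using fin by auto
    have "M \<in> h ` S" unfolding M_def using Max_in[of "h ` S"] fin ne by auto
    then obtain xs where xs: "xs \<in> S" "h xs = M" by auto
    have low: "M - h y \<le> K * e" if y: "y \<in> S" for y
    proof -
      have "?Phi (xs, y) (Kf (xs, y))" using Kf xs y by blast
      then have "M - h y \<le> Kf (xs, y) * (M - h xs + e)" using hM e he by simp
      also have "\<dots> = Kf (xs, y) * e" using xs by simp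
      also have "\<dots> \<le> K * e" using KfK[of "(xs,y)"] xs y e by (intro mult_right_mono) auto
      finally show ?thesis .
    qed
    have N: "real (card S) > 0" using fin ne by (simp add: card_gt_0_iff)
    have "1 \<le> real (card S) * M" using hs sum_bounded_above[of S h M] hM by simp
    hence A: "1 / real (card S) \<le> M" using N by (simp add: field_simps mult.commute)
    have "real (card S) * (M - K * e) \<le> 1" proof -
      have "\<And>i. i \<in> S \<Longrightarrow> M - K * e \<le> h i" using low by fastforce
      then show ?thesis using hs sum_bounded_below[of S "M - K*e" h] by simp
    qed
    hence B: "M - K * e \<le> 1 / real (card S)" using N by (simp add: field_simps mult.commute)
    show "\<bar>h x - 1 / real (card S)\<bar> \<le> K * e" using A B low[OF x] hM x by auto
  qed
qed


lemma gen_pmf: "pmf (generator n f b x0) y = (\<Sum>r\<in>{1..b+1}. pmf (gen_iter n f (b+r) x0) y) / (real b + 1)"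
  unfolding generator_def by (simp add: pmf_bind integral_pmf_of_set)

lemma telesc: fixes g :: "nat \<Rightarrow> real"
  shows "(\<Sum>r\<in>{1..b+1}. g (Suc (b+r))) = (\<Sum>r\<in>{1..b+1}. g (b+r)) + g (b+b+2) - g (b+1)"
proof -
  have "(\<Sum>r=1..b+1. g (b + Suc r) - g (b + r)) = g (b + Suc (b+1)) - g (b + 1)"
    by (rule sum_Suc_diff[of 1 "b+1" "\<lambda>r. g (b + r)"]) simp
  then show ?thesis by (simp add: sum_subtractf algebra_simps)
qed

lemma lim_inv: "(\<lambda>b::nat. K / (real b + 1)) \<longlonglongrightarrow> 0"
proof -
  have "(\<lambda>b. K * inverse (real (Suc b))) \<longlonglongrightarrow> K * 0"
    by (intro tendsto_mult tendsto_const LIMSEQ_inverse_real_of_nat)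
  then show ?thesis by (simp add: divide_inverse add.commute)
qed


theorem theorem4:
  fixes n :: nat and f :: "bool list \<Rightarrow> bool list"
  assumes "n \<ge> 1"
    and "\<And>x. x \<in> configs n \<Longrightarrow> f x \<in> configs n"
    and "strongly_connected_Gamma n f"
  shows "(\<forall>x0\<in>configs n. \<forall>y.
            (\<lambda>b. pmf (generator n f b x0) y) \<longlonglongrightarrow> pmf (pmf_of_set (configs n)) y)
         \<longleftrightarrow> doubly_stochastic (configs n) (Mmat n f)"
proof -
  note n1 = assms(1)
  define S where "S = configs n"
  define P where "P x z = pmf (gen_step n f x) z" for x z
  define a where "a k x y = pmf (gen_iter n f k x) y" for k x y
  have finS: "finite S" unfolding S_def by (rule configs_finite)
  have neS: "S \<noteq> {}" unfolding S_def using configs_ne by blast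
  have N: "real (card S) > 0" using finS neS by (simp add: card_gt_0_iff)
  have Pnn: "\<forall>u\<in>S. \<forall>v\<in>S. P u v \<ge> 0" unfolding P_def by simp
  have rs: "\<forall>z\<in>S. (\<Sum>w\<in>S. P z w) = 1" unfolding P_def S_def using step_sum[OF n1] by blast
  have MP: "Mmat n f x y = P x y" if "x \<in> S" "y \<in> S" for x y
    unfolding P_def using Mmat_eq[OF n1] that S_def by blast
  have a01: "0 \<le> a k x y \<and> a k x y \<le> 1" for k x y unfolding a_def by (simp add: pmf_le_1)
  have bk: "a (Suc k) x y = (\<Sum>z\<in>S. P x z * a k z y)" if "x \<in> S" for k x y
    unfolding a_def P_def S_def using iter_back[OF n1] that S_def by blast
  have fw: "a (Suc k) x y = (\<Sum>z\<in>S. a k x z * P z y)" if "x \<in> S" for k x y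
    unfolding a_def P_def S_def using iter_fwd[OF n1] that S_def by blast
  have G: "pmf (generator n f b x0) y = (\<Sum>r\<in>{1..b+1}. a (b+r) x0 y) / (real b + 1)" for b x0 y
    unfolding a_def by (rule gen_pmf)
  have U: "pmf (pmf_of_set (configs n)) y = (if y \<in> S then 1 / real (card S) else 0)" for y
    using finS neS unfolding S_def by (simp add: pmf_of_set)
  have DS: "doubly_stochastic (configs n) (Mmat n f) \<longleftrightarrow> (\<forall>y\<in>S. (\<Sum>x\<in>S. P x y) = 1)"
  proof -
    have "doubly_stochastic (configs n) (Mmat n f) \<longleftrightarrow> doubly_stochastic S P"
      unfolding doubly_stochastic_def S_def[symmetric] using MP by (simp cong: sum.cong)
    also have "\<dots> \<longleftrightarrow> (\<forall>y\<in>S. (\<Sum>x\<in>S. P x y) = 1)"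
      unfolding doubly_stochastic_def using Pnn rs by blast
    finally show ?thesis .
  qed
  show ?thesis
  proof
    assume conv: "\<forall>x0\<in>configs n. \<forall>y. (\<lambda>b. pmf (generator n f b x0) y) \<longlonglongrightarrow> pmf (pmf_of_set (configs n)) y"
    define x0 where "x0 = replicate n False"
    have x0: "x0 \<in> S" unfolding x0_def S_def by (rule configs_ne)
    define Gb where "Gb b x = pmf (generator n f b x0) x" for b x
    have convG: "(\<lambda>b. Gb b x) \<longlonglongrightarrow> 1 / real (card S)" if "x \<in> S" for x
    proof -
      have "(\<lambda>b. Gb b x) \<longlonglongrightarrow> pmf (pmf_of_set (configs n)) x"
        using conv x0 unfolding Gb_def S_def by blast
      then show ?thesis using U that by simp
    qed
    have "(\<Sum>x\<in>S. P x y) = 1" if y: "y \<in> S" for y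
    proof -
      have ident: "(\<Sum>x\<in>S. Gb b x * P x y) = Gb b y + (a (b+b+2) x0 y - a (b+1) x0 y) / (real b + 1)" for b
      proof -
        have "(\<Sum>x\<in>S. Gb b x * P x y) = (\<Sum>x\<in>S. (\<Sum>r\<in>{1..b+1}. a (b+r) x0 x * P x y)) / (real b + 1)"
          unfolding Gb_def G by (simp only: times_divide_eq_left sum_divide_distrib sum_distrib_right)
        also have "\<dots> = (\<Sum>r\<in>{1..b+1}. (\<Sum>x\<in>S. a (b+r) x0 x * P x y)) / (real b + 1)"
          by (subst sum.swap) simp
        also have "\<dots> = (\<Sum>r\<in>{1..b+1}. a (Suc (b+r)) x0 y) / (real b + 1)"
          using fw[OF x0] by simp
        also have "\<dots> = ((\<Sum>r\<in>{1..b+1}. a (b+r) x0 y) + a (b+b+2) x0 y - a (b+1) x0 y) / (real b + 1)"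
          by (subst telesc[of "\<lambda>k. a k x0 y"]) simp
        also have "\<dots> = Gb b y + (a (b+b+2) x0 y - a (b+1) x0 y) / (real b + 1)"
          unfolding Gb_def G by (simp add: add_divide_distrib diff_divide_distrib)
        finally show ?thesis .
      qed
      have L1: "(\<lambda>b. \<Sum>x\<in>S. Gb b x * P x y) \<longlonglongrightarrow> (\<Sum>x\<in>S. 1 / real (card S) * P x y)"
        by (intro tendsto_sum tendsto_mult tendsto_const convG)
      have R0: "(\<lambda>b. (a (b+b+2) x0 y - a (b+1) x0 y) / (real b + 1)) \<longlonglongrightarrow> 0"
      proof (rule Lim_null_comparison[OF _ lim_inv[of 1]])
        show "\<forall>\<^sub>F b in sequentially. norm ((a (b+b+2) x0 y - a (b+1) x0 y) / (real b + 1)) \<le> 1 / (real b + 1)"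
        proof (intro always_eventually allI)
          fix b :: nat
          have "\<bar>a (b+b+2) x0 y - a (b+1) x0 y\<bar> \<le> 1" using a01[of "b+b+2" x0 y] a01[of "b+1" x0 y] by linarith
          then show "norm ((a (b+b+2) x0 y - a (b+1) x0 y) / (real b + 1)) \<le> 1 / (real b + 1)"
            by (simp add: divide_right_mono)
        qed
      qed
      have L2: "(\<lambda>b. \<Sum>x\<in>S. Gb b x * P x y) \<longlonglongrightarrow> 1 / real (card S) + 0"
        unfolding ident by (intro tendsto_add convG y R0)
      have "(\<Sum>x\<in>S. 1 / real (card S) * P x y) = 1 / real (card S)"
        using LIMSEQ_unique[OF L1 L2] by simp
      then have "1 / real (card S) * (\<Sum>x\<in>S. P x y) = 1 / real (card S) * 1"
        by (simp add: sum_distrib_left)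
      then show ?thesis using N by simp
    qed
    then show "doubly_stochastic (configs n) (Mmat n f)" using DS by blast
  next
    assume "doubly_stochastic (configs n) (Mmat n f)"
    then have cs: "\<forall>y\<in>S. (\<Sum>x\<in>S. P x y) = 1" using DS by blast
    have c: "(1 / real n) > 0" using n1 by simp
    have R: "(u, v) \<in> {(u, v). arc n f u v} \<Longrightarrow> u \<in> S \<and> v \<in> S \<and> P u v \<ge> 1 / real n" for u v
      using step_arc[OF n1, of f u v] Ff_in unfolding P_def S_def arc_def by auto
    have sc: "\<forall>x\<in>S. \<forall>y\<in>S. (x, y) \<in> {(u, v). arc n f u v}\<^sup>*"
      using assms(3) unfolding strongly_connected_Gamma_def S_def .
    obtain K where K0: "K \<ge> 0" and KB: "\<forall>h e. e \<ge> 0 \<longrightarrow> (\<forall>z\<in>S. h z - (\<Sum>w\<in>S. P z w * h w) \<le> e) \<longrightarrow>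
       (\<Sum>z\<in>S. h z) = 1 \<longrightarrow> (\<forall>x\<in>S. \<bar>h x - 1 / card S\<bar> \<le> K * e)"
      using bound_all[OF finS neS Pnn c R rs sc] by blast
    show "\<forall>x0\<in>configs n. \<forall>y. (\<lambda>b. pmf (generator n f b x0) y) \<longlonglongrightarrow> pmf (pmf_of_set (configs n)) y"
    proof (intro ballI allI)
      fix x0 y assume x0': "x0 \<in> configs n"
      then have x0: "x0 \<in> S" unfolding S_def .
      show "(\<lambda>b. pmf (generator n f b x0) y) \<longlonglongrightarrow> pmf (pmf_of_set (configs n)) y"
      proof (cases "y \<in> S")
        case False
        have "a k x0 y = 0" for k
          unfolding a_def using set_iter[OF n1 x0', of f k] False S_def by (auto simp: pmf_eq_0_set_pmf)
        then show ?thesis using False by (simp add: G U)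
      next
        case y: True
        have colsum: "(\<Sum>x\<in>S. a k x y) = 1" for k
        proof (induction k)
          case 0 show ?case using y finS by (simp add: a_def gen_iter_0 indicator_def)
        next
          case (Suc k)
          have "(\<Sum>x\<in>S. a (Suc k) x y) = (\<Sum>x\<in>S. \<Sum>z\<in>S. P x z * a k z y)"
            using bk by (simp cong: sum.cong)
          also have "\<dots> = (\<Sum>z\<in>S. (\<Sum>x\<in>S. P x z) * a k z y)"
            by (subst sum.swap) (simp add: sum_distrib_right)
          also have "\<dots> = (\<Sum>z\<in>S. a k z y)" using cs by simp
          finally show ?case using Suc by simp
        qed
        define H where "H b x = (\<Sum>r\<in>{1..b+1}. a (b+r) x y) / (real b + 1)" for b x
        have Hs: "(\<Sum>x\<in>S. H b x) = 1" for b
        proof -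
          have "(\<Sum>x\<in>S. H b x) = (\<Sum>r\<in>{1..b+1}. \<Sum>x\<in>S. a (b+r) x y) / (real b + 1)"
            unfolding H_def by (simp only: sum_divide_distrib[symmetric]) (rule arg_cong[where f="\<lambda>t. t / _"], rule sum.swap)
          also have "\<dots> = 1" using colsum by simp
          finally show ?thesis .
        qed
        have He: "\<forall>z\<in>S. H b z - (\<Sum>w\<in>S. P z w * H b w) \<le> 1 / (real b + 1)" for b
        proof
          fix z assume z: "z \<in> S"
          have "(\<Sum>w\<in>S. P z w * H b w) = (\<Sum>w\<in>S. \<Sum>r\<in>{1..b+1}. P z w * a (b+r) w y) / (real b + 1)"
            unfolding H_def by (simp only: times_divide_eq_right sum_divide_distrib sum_distrib_left)
          also have "\<dots> = (\<Sum>r\<in>{1..b+1}. \<Sum>w\<in>S. P z w * a (b+r) w y) / (real b + 1)"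
            by (subst sum.swap) simp
          also have "\<dots> = (\<Sum>r\<in>{1..b+1}. a (Suc (b+r)) z y) / (real b + 1)"
            using bk[OF z] by simp
          also have "\<dots> = ((\<Sum>r\<in>{1..b+1}. a (b+r) z y) + a (b+b+2) z y - a (b+1) z y) / (real b + 1)"
            by (subst telesc[of "\<lambda>k. a k z y"]) simp
          finally have eq: "H b z - (\<Sum>w\<in>S. P z w * H b w) = (a (b+1) z y - a (b+b+2) z y) / (real b + 1)"
            unfolding H_def by (simp add: field_simps)
          have "a (b+1) z y - a (b+b+2) z y \<le> 1" using a01[of "b+1" z y] a01[of "b+b+2" z y] by linarith
          then show "H b z - (\<Sum>w\<in>S. P z w * H b w) \<le> 1 / (real b + 1)"
            unfolding eq by (simp add: divide_right_mono)
        qed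
        have bnd: "\<bar>H b x0 - 1 / real (card S)\<bar> \<le> K / (real b + 1)" for b
        proof -
          have "\<bar>H b x0 - 1 / real (card S)\<bar> \<le> K * (1 / (real b + 1))"
            by (rule KB[rule_format, of "1 / (real b + 1)" "H b"]) (use He[of b] Hs[of b] x0 in auto)
          then show ?thesis by simp
        qed
        have "(\<lambda>b. H b x0 - 1 / real (card S)) \<longlonglongrightarrow> 0"
          by (rule Lim_null_comparison[OF _ lim_inv[of K]]) (use bnd in simp)
        then have "(\<lambda>b. H b x0 - 1 / real (card S) + 1 / real (card S)) \<longlonglongrightarrow> 0 + 1 / real (card S)"
          by (intro tendsto_add tendsto_const)
        then show ?thesis using y by (simp add: G U H_def)
      qed
    qed
  qed
qed

end
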